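(* Let $n_1,n_2,n_3$ be pairwise coprime positive integers forming a minimal system of generators of $\mathcal S=\langle n_1,n_2,n_3\rangle$, and let $\{i,j,k\}=\{1,2,3\}$. Put $\lambda_{ij}=[-n_in_j^{-1}]_{n_k}$ and $\lambda_{ik}=[-n_in_k^{-1}]_{n_j}$. Then $\lambda_{ij},\lambda_{ik}$ are positive integers and $$n_i=n_jn_k-\lambda_{ij}n_j-\lambda_{ik}n_k .$$
   Context: $\mathbb N$ denotes the nonnegative integers. For integers $a_1,\dots,a_r$, $\langle a_1,\dots,a_r\rangle=\{\sum t_la_l: t_l\in\mathbb N\}$. Minimal system of generators means that no $n_l$ belongs to the monoid generated by the other two. For an integer $m$ and $n\ge 1$, $[m]_n\in\{0,\dots,n-1\}$ denotes the remainder of $m$ upon division by $n$; for $a$ coprime to $n$, the symbol $a^{-1}$ inside $[\cdot]_n$ denotes a multiplicative inverse of $a$ modulo $n$ (the remainder does not depend on the choice). *)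

theory Defs
  imports "HOL-Number_Theory.Number_Theory"
begin

definition monoid_gen :: "int list \<Rightarrow> int set" where
  "monoid_gen as = {sum_list (map2 (\<lambda>t a. int t * a) ts as) | ts :: nat list. length ts = length as}"

text \<open>A multiplicative inverse of a modulo m (any choice; only used inside a remainder).\<close>
definition inv_mod :: "int \<Rightarrow> int \<Rightarrow> int" where
  "inv_mod a m = (SOME u. [a * u = 1] (mod m))"

definition lam :: "int \<Rightarrow> int \<Rightarrow> int \<Rightarrow> int" where
  "lam a b m = (- a * inv_mod b m) mod m"

end

theory Submission
  imports Defs
begin

lemma mg2: "x \<in> monoid_gen [b, c] \<longleftrightarrow> (\<exists>t s::nat. x = int t * b + int s * c)"
proof
  assume "x \<in> monoid_gen [b, c]"
  then obtain ts :: "nat list" where "length ts = length [b,c]" "x = sum_list (map2 (\<lambda>t a. int t * a) ts [b,c])"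
    unfolding monoid_gen_def by blast
  then show "\<exists>t s::nat. x = int t * b + int s * c"
    by (cases ts rule: list.exhaust; cases "tl ts" rule: list.exhaust) auto
next
  assume "\<exists>t s::nat. x = int t * b + int s * c"
  then obtain t s :: nat where "x = int t * b + int s * c" by blast
  then show "x \<in> monoid_gen [b, c]" unfolding monoid_gen_def
    by (intro CollectI exI[of _ "[t,s]"]) auto
qed

lemma swp: "\<not> (\<exists>t s::nat. a = int t * b + int s * c) \<Longrightarrow> \<not> (\<exists>t s::nat. a = int t * c + int s * (b::int))"
proof
  assume h: "\<not> (\<exists>t s::nat. a = int t * b + int s * c)" and "\<exists>t s::nat. a = int t * c + int s * b"
  then obtain t s :: nat where "a = int t * c + int s * b" by blast
  then have "a = int s * b + int t * c" by simp
  with h show False by blast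
qed

lemma mg_intro:
  assumes "a = b * p + c * q" "p \<ge> 0" "q \<ge> 0"
  shows "\<exists>t s::nat. a = int t * b + int s * c"
  using assms by (intro exI[of _ "nat p"] exI[of _ "nat q"]) (simp add: mult.commute)

lemma lam_cong:
  fixes a b c :: int
  assumes "coprime b c"
  shows "c dvd lam a b c * b + a"
proof -
  have "\<exists>u. [b * u = 1] (mod c)" using cong_solve_coprime_int assms by blast
  then have u: "[b * inv_mod b c = 1] (mod c)" unfolding inv_mod_def by (rule someI_ex)
  have "[lam a b c * b = (- a * inv_mod b c) * b] (mod c)"
    unfolding lam_def by (simp add: cong_def mod_mult_left_eq)
  also have "[(- a * inv_mod b c) * b = - a * (b * inv_mod b c)] (mod c)"
    by (simp add: ac_simps)
  also have "[- a * (b * inv_mod b c) = - a * 1] (mod c)"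
    using u by (rule cong_mult[OF cong_refl])
  finally have "[lam a b c * b = - a] (mod c)" by simp
  then show ?thesis by (simp add: cong_iff_dvd_diff)
qed

lemma core:
  fixes a b c :: int
  assumes a: "a > 0" and b: "b > 0" and c: "c > 0"
    and cbc: "coprime b c" and cab: "coprime a b" and cac: "coprime a c"
    and nm: "\<not> (\<exists>t s::nat. a = int t * b + int s * c)"
  shows "lam a b c > 0 \<and> lam a c b > 0 \<and> a = b * c - lam a b c * b - lam a c b * c"
proof -
  define L1 where "L1 = lam a b c"
  define L2 where "L2 = lam a c b"
  have L1b: "0 \<le> L1" "L1 < c" unfolding L1_def lam_def using c by auto
  have L2b: "0 \<le> L2" "L2 < b" unfolding L2_def lam_def using b by auto
  have d1: "c dvd L1 * b + a" unfolding L1_def by (rule lam_cong[OF cbc])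
  have d2: "b dvd L2 * c + a" unfolding L2_def by (rule lam_cong) (simp add: cbc coprime_commute)
  define x where "x = b * c - L1 * b - L2 * c"
  have "b dvd x - a"
  proof -
    have e: "x - a = b * (c - L1) - (L2 * c + a)" by (simp add: x_def algebra_simps)
    show ?thesis unfolding e by (rule dvd_diff) (simp_all add: d2)
  qed
  moreover have "c dvd x - a"
  proof -
    have e: "x - a = c * (b - L2) - (L1 * b + a)" by (simp add: x_def algebra_simps)
    show ?thesis unfolding e by (rule dvd_diff) (simp_all add: d1)
  qed
  ultimately have "b * c dvd x - a" using cbc by (rule divides_mult)
  then obtain m where m: "x - a = b * c * m" by blast
  have xle: "x \<le> b * c" unfolding x_def using L1b L2b b c
    by (smt (verit) mult_nonneg_nonneg)
  have "m = 0"
  proof (rule ccontr)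
    assume "m \<noteq> 0"
    show False
    proof (cases "m > 0")
      case True
      then have "b * c * m \<ge> b * c * 1" using b c by (intro mult_left_mono) auto
      then show False using m xle a by linarith
    next
      case False
      then have mneg: "-m \<ge> 1" using \<open>m \<noteq> 0\<close> by linarith
      have "a = b * (c * (-m) - L1) + c * (b - L2)" using m by (simp add: x_def algebra_simps)
      moreover have "c * (-m) \<ge> c * 1" using mneg c by (intro mult_left_mono) auto
      ultimately have "\<exists>t s::nat. a = int t * b + int s * c"
        using L1b L2b by (intro mg_intro[of a b "c * (-m) - L1" c "b - L2"]) auto
      then show False using nm by blast
    qed
  qed
  then have ax: "a = x" using m by simp
  have "L1 \<noteq> 0"
  proof
    assume "L1 = 0"
    then have "a = b * 0 + c * (b - L2)" using ax by (simp add: x_def algebra_simps)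
    then have "\<exists>t s::nat. a = int t * b + int s * c"
      using L2b by (intro mg_intro[of a b 0 c "b - L2"]) auto
    then show False using nm by blast
  qed
  moreover have "L2 \<noteq> 0"
  proof
    assume "L2 = 0"
    then have "a = b * (c - L1) + c * 0" using ax by (simp add: x_def algebra_simps)
    then have "\<exists>t s::nat. a = int t * b + int s * c"
      using L1b by (intro mg_intro[of a b "c - L1" c 0]) auto
    then show False using nm by blast
  qed
  ultimately show ?thesis using L1b L2b ax unfolding L1_def L2_def x_def by auto
qed

theorem mainTheorem1:
  fixes n :: "nat \<Rightarrow> int" and i j k :: nat
  assumes pos: "\<forall>l\<in>{1,2,3}. n l > 0"
    and coprime: "\<forall>a\<in>{1,2,3}. \<forall>b\<in>{1,2,3}. a \<noteq> b \<longrightarrow> coprime (n a) (n b)"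
    and minimal: "n 1 \<notin> monoid_gen [n 2, n 3]" "n 2 \<notin> monoid_gen [n 1, n 3]"
                 "n 3 \<notin> monoid_gen [n 1, n 2]"
    and ijk: "{i, j, k} = {1, 2, 3}"
  shows "lam (n i) (n j) (n k) > 0 \<and> lam (n i) (n k) (n j) > 0 \<and>
         n i = n j * n k - lam (n i) (n j) (n k) * n j - lam (n i) (n k) (n j) * n k"
proof -
  have c: "(i = 1 \<and> j = 2 \<and> k = 3) \<or> (i = 1 \<and> j = 3 \<and> k = 2) \<or> (i = 2 \<and> j = 1 \<and> k = 3) \<or>
           (i = 2 \<and> j = 3 \<and> k = 1) \<or> (i = 3 \<and> j = 1 \<and> k = 2) \<or> (i = 3 \<and> j = 2 \<and> k = 1)"
  proof -
    have i: "i \<in> {1,2,3}" and j: "j \<in> {1,2,3}" and k: "k \<in> {1,2,3}" using ijk by blast+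
    have "1 \<in> {i,j,k}" "2 \<in> {i,j,k}" "3 \<in> {i,j,k}" using ijk by blast+
    then show ?thesis using i j k by auto
  qed
  have m1: "\<not> (\<exists>t s::nat. n 1 = int t * n 2 + int s * n 3)"
    using minimal(1) unfolding mg2 .
  have m1': "\<not> (\<exists>t s::nat. n 1 = int t * n 3 + int s * n 2)"
    using swp[OF m1] .
  have m2: "\<not> (\<exists>t s::nat. n 2 = int t * n 1 + int s * n 3)"
    using minimal(2) unfolding mg2 .
  have m2': "\<not> (\<exists>t s::nat. n 2 = int t * n 3 + int s * n 1)"
    using swp[OF m2] .
  have m3: "\<not> (\<exists>t s::nat. n 3 = int t * n 1 + int s * n 2)"
    using minimal(3) unfolding mg2 .
  have m3': "\<not> (\<exists>t s::nat. n 3 = int t * n 2 + int s * n 1)"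
    using swp[OF m3] .
  have p: "n 1 > 0" "n 2 > 0" "n 3 > 0" using pos by auto
  have cp: "coprime (n 1) (n 2)" "coprime (n 1) (n 3)" "coprime (n 2) (n 3)"
     "coprime (n 2) (n 1)" "coprime (n 3) (n 1)" "coprime (n 3) (n 2)" using coprime by auto
  from c show ?thesis
    using core[OF p(1) p(2) p(3) cp(3) cp(1) cp(2) m1]
          core[OF p(1) p(3) p(2) cp(6) cp(2) cp(1) m1']
          core[OF p(2) p(1) p(3) cp(2) cp(4) cp(3) m2]
          core[OF p(2) p(3) p(1) cp(5) cp(3) cp(4) m2']
          core[OF p(3) p(1) p(2) cp(1) cp(5) cp(6) m3]
          core[OF p(3) p(2) p(1) cp(4) cp(6) cp(5) m3']
    by auto
qed

end
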